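(* For every $m\in\mathbb N_+$, $k\ge1$, $\xi\in\mathbb R^d$ and every configuration $\mathbf a$, $$\sum_{F\subset E_d(\square_m),|F|=k}D_F\mathscr E_{m,\xi}(\mathbf a)=\frac1{|\square_m|}\Big\langle\nabla\ell_\xi,\ \mathbf a\sum_{F\subset E_d(\square_m),|F|=k}(D_F\nabla v_{m,\xi})(\mathbf a)\Big\rangle_{\square_m}+\frac1{|\square_m|}\sum_{e\in E_d(\square_m)}\Big\langle\nabla\ell_\xi,\ (\mathbf a^e-\mathbf a)\sum_{G\subset E_d(\square_m),|G|=k-1}(D_G\nabla v_{m,\xi})(\mathbf a^e)\Big\rangle_{\square_m}.$$
   Context: Bond configurations $\mathbf a\in\{0,1\}^{E_d}$ on $\mathbb Z^d$. $E_d(U)$: nearest-neighbour edges with both endpoints in $U$; $\partial U=\{x\in U:\exists y\sim x, y\notin U\}$, $\mathrm{int}(U)=U\setminus\partial U$; $\square_m=\mathbb Z^d\cap(-3^m/2,3^m/2)^d$; $\ell_\xi(x)=\xi\cdot x$. For $u:\mathbb Z^d\to\mathbb R$, $\nabla u(x,y)=u(y)-u(x)$ on oriented edges; $\nabla\cdot(\mathbf a\nabla u)(x)=\sum_{z\sim x}\mathbf a(\{x,z\})(u(z)-u(x))$; for vector fields, $\langle F,G\rangle_V=\sum_{e\in E_d(V)}F(e)G(e)$, and $(\mathbf b F)(e)=\mathbf b(e)F(e)$. $\mathscr E_{m,\xi}(\mathbf a)=\inf_{v\in\ell_\xi+C_0(\square_m)}|\square_m|^{-1}\sum_{e\in E_d(\square_m)}\mathbf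 a(e)|\nabla v(e)|^2$, with $C_0(U)$ the functions vanishing on $\partial U$. For each configuration $\mathbf b$, $v_{m,\xi}(\mathbf b)$ is a fixed function on $\square_m$ with $v_{m,\xi}(\mathbf b)=\ell_\xi$ on $\partial\square_m$ and $-\nabla\cdot(\mathbf b\nabla v_{m,\xi}(\mathbf b))=0$ at every $x\in\mathrm{int}(\square_m)$ (such a function exists: harmonic on clusters connected to $\partial\square_m$, constant on the other clusters; it attains the infimum in $\mathscr E_{m,\xi}(\mathbf b)$). $\mathbf a^G(e)=\mathbf 1_{e\in G}+\mathbf a(e)\mathbf 1_{e\notin G}$, $\mathbf a^e=\mathbf a^{\{e\}}$; $D_Gf(\mathbf a)=\sum_{G'\subset G}(-1)^{|G\setminus G'|}f(\mathbf a^{G'})$, and $(D_Gf)(\mathbf a^e)$ means $D_Gf$ evaluated at the configuration $\mathbf a^e$. *)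

theory Defs
  imports "HOL-Analysis.Analysis"
begin

text \<open>A nearest-neighbour edge
 {x, x + e_i} is represented canonically by the oriented pair (x, x + e_i).
 A bond configuration assigns a value in {0,1} (here: bool) to each edge.\<close>

type_synonym ('d) pt = "int ^ ('d::finite)"
type_synonym 'd edge = "'d pt \<times> 'd pt"
type_synonym 'd conf = "('d::finite) edge \<Rightarrow> bool"

definition is_edge :: "('d::finite) edge \<Rightarrow> bool" where
  "is_edge e \<longleftrightarrow> (\<exists>i. snd e = fst e + axis i 1)"

definition adj :: "('d::finite) pt \<Rightarrow> 'd pt \<Rightarrow> bool" where
  "adj x y \<longleftrightarrow> (\<exists>i. y = x + axis i 1 \<or> x = y + axis i 1)"

definition edges_in :: "('d::finite) pt set \<Rightarrow> 'd edge set" where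
  "edges_in U = {e. is_edge e \<and> fst e \<in> U \<and> snd e \<in> U}"

definition bdry :: "('d::finite) pt set \<Rightarrow> 'd pt set" where
  "bdry U = {x \<in> U. \<exists>y. adj x y \<and> y \<notin> U}"

definition intr :: "('d::finite) pt set \<Rightarrow> 'd pt set" where
  "intr U = U - bdry U"

definition cube :: "nat \<Rightarrow> ('d::finite) pt set" where
  "cube m = {x. \<forall>i. \<bar>real_of_int (x $ i)\<bar> < 3 ^ m / 2}"

definition lin :: "real ^ ('d::finite) \<Rightarrow> 'd pt \<Rightarrow> real" where
  "lin \<xi> x = (\<Sum>i\<in>UNIV. \<xi> $ i * real_of_int (x $ i))"

definition grad :: "(('d::finite) pt \<Rightarrow> real) \<Rightarrow> 'd edge \<Rightarrow> real" where
  "grad u e = u (snd e) - u (fst e)"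

definition divag :: "('d::finite) conf \<Rightarrow> ('d pt \<Rightarrow> real) \<Rightarrow> 'd pt \<Rightarrow> real" where
  "divag a u x = (\<Sum>i\<in>UNIV.
      of_bool (a (x, x + axis i 1)) * (u (x + axis i 1) - u x)
    + of_bool (a (x - axis i 1, x)) * (u (x - axis i 1) - u x))"

definition inner_on :: "('d::finite) pt set \<Rightarrow> ('d edge \<Rightarrow> real) \<Rightarrow> ('d edge \<Rightarrow> real) \<Rightarrow> real" where
  "inner_on V F G = (\<Sum>e\<in>edges_in V. F e * G e)"

definition energy :: "nat \<Rightarrow> real ^ ('d::finite) \<Rightarrow> 'd conf \<Rightarrow> real" where
  "energy m \<xi> a = Inf {(1 / real (card (cube m :: 'd pt set))) *
        (\<Sum>e\<in>edges_in (cube m). of_bool (a e) * (grad v e)\<^sup>2) | v.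
        \<forall>x\<in>bdry (cube m). v x = lin \<xi> x}"

definition conf_upd :: "('d::finite) edge set \<Rightarrow> 'd conf \<Rightarrow> 'd conf" where
  "conf_upd G a = (\<lambda>e. e \<in> G \<or> a e)"

definition Dop :: "('d::finite) edge set \<Rightarrow> ('d conf \<Rightarrow> real) \<Rightarrow> 'd conf \<Rightarrow> real" where
  "Dop G f a = (\<Sum>G'\<in>Pow G. (-1) ^ card (G - G') * f (conf_upd G' a))"

end

theory Submission
  imports Defs
begin

lemma finite_cube: "finite (cube m :: ('d::finite) pt set)"
proof -
  define N :: int where "N = 3 ^ m"
  have sub: "(cube m :: 'd pt set) \<subseteq> vec_nth -` (PiE UNIV (\<lambda>_. {-N..N}))"
  proof
    fix x :: "'d pt" assume "x \<in> cube m"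
    then have h: "\<bar>real_of_int (x $ i)\<bar> < 3 ^ m / 2" for i by (auto simp: cube_def)
    have "\<bar>x $ i\<bar> \<le> N" for i
    proof -
      have "real_of_int \<bar>x $ i\<bar> < real_of_int N" using h[of i]
        by (simp add: N_def)
      then show ?thesis by linarith
    qed
    then have "\<forall>i. x $ i \<in> {-N..N}" by (meson abs_le_iff atLeastAtMost_iff minus_le_iff)
    then show "x \<in> vec_nth -` (PiE UNIV (\<lambda>_. {-N..N}))"
      by (auto simp: PiE_def extensional_def)
  qed
  have "inj (vec_nth :: 'd pt \<Rightarrow> _)" by (simp add: inj_def vec_eq_iff fun_eq_iff)
  then have "finite (vec_nth -` (PiE UNIV (\<lambda>_. {-N..N})) :: 'd pt set)"
    by (intro finite_vimageI finite_PiE) auto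
  then show ?thesis using sub finite_subset by blast
qed

lemma finite_edges: "finite Q \<Longrightarrow> finite (edges_in Q)"
  by (rule finite_subset[of _ "Q \<times> Q"]) (auto simp: edges_in_def)

lemma fiber_snd:
  assumes "z \<in> intr Q"
  shows "{e \<in> edges_in Q. snd e = z} = (\<lambda>i. (z - axis i 1, z)) ` UNIV"
proof -
  have zQ: "z \<in> Q" and nb: "\<And>y. adj z y \<Longrightarrow> y \<in> Q" using assms by (auto simp: intr_def bdry_def)
  show ?thesis
  proof (intro equalityI subsetI)
    fix e assume "e \<in> {e \<in> edges_in Q. snd e = z}"
    then obtain i where "snd e = fst e + axis i 1" "snd e = z" by (auto simp: edges_in_def is_edge_def)
    then have "e = (z - axis i 1, z)" by (cases e) (auto simp: algebra_simps)
    then show "e \<in> range (\<lambda>i. (z - axis i 1, z))" by blast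
  next
    fix e assume "e \<in> range (\<lambda>i. (z - axis i 1, z))"
    then obtain i where e: "e = (z - axis i 1, z)" by blast
    have "adj z (z - axis i 1)" unfolding adj_def by auto
    then show "e \<in> {e \<in> edges_in Q. snd e = z}" using e zQ nb
      by (auto simp: edges_in_def is_edge_def)
  qed
qed

lemma fiber_fst:
  assumes "z \<in> intr Q"
  shows "{e \<in> edges_in Q. fst e = z} = (\<lambda>i. (z, z + axis i 1)) ` UNIV"
proof -
  have zQ: "z \<in> Q" and nb: "\<And>y. adj z y \<Longrightarrow> y \<in> Q" using assms by (auto simp: intr_def bdry_def)
  show ?thesis
  proof (intro equalityI subsetI)
    fix e assume "e \<in> {e \<in> edges_in Q. fst e = z}"
    then obtain i where "snd e = fst e + axis i 1" "fst e = z" by (auto simp: edges_in_def is_edge_def)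
    then have "e = (z, z + axis i 1)" by (cases e) (auto simp: algebra_simps)
    then show "e \<in> range (\<lambda>i. (z, z + axis i 1))" by blast
  next
    fix e assume "e \<in> range (\<lambda>i. (z, z + axis i 1))"
    then obtain i where e: "e = (z, z + axis i 1)" by blast
    have "adj z (z + axis i 1)" unfolding adj_def by auto
    then show "e \<in> {e \<in> edges_in Q. fst e = z}" using e zQ nb
      by (auto simp: edges_in_def is_edge_def)
  qed
qed

lemma inj_axis1: "inj (\<lambda>i. axis i (1::int))"
  by (auto simp: inj_def axis_eq_axis)

lemma sum_fiber_snd:
  assumes "z \<in> intr Q"
  shows "(\<Sum>e\<in>{e \<in> edges_in Q. snd e = z}. h e) = (\<Sum>i\<in>UNIV. h (z - axis i 1, z))"
  unfolding fiber_snd[OF assms]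
  by (subst sum.reindex) (auto simp: inj_def axis_eq_axis)

lemma sum_fiber_fst:
  assumes "z \<in> intr Q"
  shows "(\<Sum>e\<in>{e \<in> edges_in Q. fst e = z}. h e) = (\<Sum>i\<in>UNIV. h (z, z + axis i 1))"
  unfolding fiber_fst[OF assms]
  by (subst sum.reindex) (auto simp: inj_def axis_eq_axis)


lemma Q_split: "Q = intr Q \<union> bdry Q" "intr Q \<inter> bdry Q = {}"
  by (auto simp: intr_def bdry_def)

lemma sum_vertex:
  fixes w \<phi> :: "_ \<Rightarrow> real"
  assumes fin: "finite Q" and phi0: "\<forall>x\<in>bdry Q. \<phi> x = 0"
    and p: "\<And>e. e \<in> edges_in Q \<Longrightarrow> p e \<in> Q"
  shows "(\<Sum>e\<in>edges_in Q. w e * \<phi> (p e)) =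
         (\<Sum>z\<in>intr Q. \<phi> z * (\<Sum>e\<in>{e \<in> edges_in Q. p e = z}. w e))"
proof -
  have "(\<Sum>e\<in>edges_in Q. w e * \<phi> (p e)) =
        (\<Sum>z\<in>Q. \<Sum>e\<in>{e \<in> edges_in Q. p e = z}. w e * \<phi> (p e))"
    by (rule sum.group[symmetric]) (use fin finite_edges p in auto)
  also have "\<dots> = (\<Sum>z\<in>Q. \<phi> z * (\<Sum>e\<in>{e \<in> edges_in Q. p e = z}. w e))"
  proof (rule sum.cong)
    fix z assume "z \<in> Q"
    have "(\<Sum>e\<in>{e \<in> edges_in Q. p e = z}. w e * \<phi> (p e)) = (\<Sum>e\<in>{e \<in> edges_in Q. p e = z}. w e * \<phi> z)"
      by (rule sum.cong) auto
    also have "\<dots> = \<phi> z * (\<Sum>e\<in>{e \<in> edges_in Q. p e = z}. w e)"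
      by (simp add: sum_distrib_left mult.commute)
    finally show "(\<Sum>e\<in>{e \<in> edges_in Q. p e = z}. w e * \<phi> (p e)) = \<phi> z * (\<Sum>e\<in>{e \<in> edges_in Q. p e = z}. w e)" .
  qed simp
  also have "\<dots> = (\<Sum>z\<in>intr Q. \<phi> z * (\<Sum>e\<in>{e \<in> edges_in Q. p e = z}. w e))"
    by (rule sum.mono_neutral_right) (use fin phi0 in \<open>auto simp: intr_def\<close>)
  finally show ?thesis .
qed

lemma sbp:
  assumes fin: "finite Q" and phi0: "\<forall>x\<in>bdry Q. \<phi> x = 0"
  shows "(\<Sum>e\<in>edges_in Q. of_bool (b e) * grad u e * grad \<phi> e)
         = - (\<Sum>x\<in>intr Q. \<phi> x * divag b u x)"
proof -
  define w where "w e = of_bool (b e) * grad u e" for e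
  have "(\<Sum>e\<in>edges_in Q. of_bool (b e) * grad u e * grad \<phi> e)
      = (\<Sum>e\<in>edges_in Q. w e * \<phi> (snd e)) - (\<Sum>e\<in>edges_in Q. w e * \<phi> (fst e))"
    by (simp add: w_def grad_def sum_subtractf[symmetric] algebra_simps)
  also have "\<dots> = (\<Sum>z\<in>intr Q. \<phi> z * (\<Sum>e\<in>{e \<in> edges_in Q. snd e = z}. w e))
                 - (\<Sum>z\<in>intr Q. \<phi> z * (\<Sum>e\<in>{e \<in> edges_in Q. fst e = z}. w e))"
    by (subst sum_vertex[OF fin phi0], simp add: edges_in_def,
        subst sum_vertex[OF fin phi0], simp_all add: edges_in_def)
  also have "\<dots> = - (\<Sum>x\<in>intr Q. \<phi> x * divag b u x)"
  proof -
    have "\<phi> z * (\<Sum>e\<in>{e \<in> edges_in Q. snd e = z}. w e)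
          - \<phi> z * (\<Sum>e\<in>{e \<in> edges_in Q. fst e = z}. w e)
        = - (\<phi> z * divag b u z)" if z: "z \<in> intr Q" for z
    proof -
      have "(\<Sum>e\<in>{e \<in> edges_in Q. snd e = z}. w e) - (\<Sum>e\<in>{e \<in> edges_in Q. fst e = z}. w e)
          = - divag b u z"
        unfolding sum_fiber_snd[OF z] sum_fiber_fst[OF z] divag_def sum_subtractf[symmetric] sum_negf[symmetric]
        by (rule sum.cong) (simp_all add: w_def grad_def algebra_simps)
      then show ?thesis by (simp add: right_diff_distrib[symmetric])
    qed
    then show ?thesis
      by (simp add: sum_subtractf[symmetric] sum_negf[symmetric])
  qed
  finally show ?thesis .
qed


lemma grad_diff: "grad (\<lambda>x. f x - g x) e = grad f e - grad g e"
  by (simp add: grad_def)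

lemma sbp_zero:
  assumes fin: "finite Q" and phi0: "\<forall>x\<in>bdry Q. \<phi> x = 0"
    and harm: "\<forall>x\<in>intr Q. divag b u x = 0"
  shows "(\<Sum>e\<in>edges_in Q. of_bool (b e) * grad u e * grad \<phi> e) = 0"
  using sbp[OF fin phi0, of b u] harm by simp

lemma energy_eq:
  assumes bd: "\<forall>x\<in>bdry (cube m). u x = lin \<xi> x"
    and harm: "\<forall>x\<in>intr (cube m). divag b u x = 0"
  shows "energy m \<xi> b = (1 / real (card (cube m :: ('d::finite) pt set))) *
     (\<Sum>e\<in>edges_in (cube m :: 'd pt set). of_bool (b e) * (grad (lin \<xi>) e * grad u e))"
proof -
  define Q where "Q = (cube m :: 'd pt set)"
  define c where "c = 1 / real (card Q)"
  define S where "S w = (\<Sum>e\<in>edges_in Q. of_bool (b e) * (grad w e)\<^sup>2)" for w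
  have fin: "finite Q" unfolding Q_def by (rule finite_cube)
  have c0: "c \<ge> 0" by (simp add: c_def)
  have min: "S u \<le> S w" if w: "\<forall>x\<in>bdry Q. w x = lin \<xi> x" for w
  proof -
    define \<phi> where "\<phi> x = w x - u x" for x
    have phi0: "\<forall>x\<in>bdry Q. \<phi> x = 0" using w bd by (simp add: \<phi>_def Q_def)
    have gw: "grad w e = grad u e + grad \<phi> e" for e by (simp add: grad_def \<phi>_def)
    have "S w = S u + 2 * (\<Sum>e\<in>edges_in Q. of_bool (b e) * grad u e * grad \<phi> e)
               + (\<Sum>e\<in>edges_in Q. of_bool (b e) * (grad \<phi> e)\<^sup>2)"
      unfolding S_def gw by (simp add: sum.distrib sum_distrib_left power2_eq_square algebra_simps)
    also have "(\<Sum>e\<in>edges_in Q. of_bool (b e) * grad u e * grad \<phi> e) = 0"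
      by (rule sbp_zero[OF fin phi0]) (use harm in \<open>simp add: Q_def\<close>)
    finally show ?thesis by (simp add: sum_nonneg)
  qed
  have "energy m \<xi> b = c * S u"
    unfolding energy_def Q_def[symmetric] c_def[symmetric] S_def[symmetric]
  proof (rule cInf_eq_minimum)
    show "c * S u \<in> {c * S v |v. \<forall>x\<in>bdry Q. v x = lin \<xi> x}" using bd by (auto simp: Q_def)
  next
    fix y assume "y \<in> {c * S v |v. \<forall>x\<in>bdry Q. v x = lin \<xi> x}"
    then obtain w where "y = c * S w" "\<forall>x\<in>bdry Q. w x = lin \<xi> x" by blast
    then show "c * S u \<le> y" using min c0 by (simp add: mult_left_mono)
  qed
  also have "S u = (\<Sum>e\<in>edges_in Q. of_bool (b e) * (grad (lin \<xi>) e * grad u e))"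
  proof -
    have phi0: "\<forall>x\<in>bdry Q. (\<lambda>x. u x - lin \<xi> x) x = 0" using bd by (simp add: Q_def)
    have "(\<Sum>e\<in>edges_in Q. of_bool (b e) * grad u e * grad (\<lambda>x. u x - lin \<xi> x) e) = 0"
      by (rule sbp_zero[OF fin phi0]) (use harm in \<open>simp add: Q_def\<close>)
    then show ?thesis
      unfolding S_def grad_diff
      by (simp add: power2_eq_square algebra_simps sum_subtractf)
  qed
  finally show ?thesis by (simp add: c_def Q_def)
qed


lemma conf_upd_insert: "conf_upd (insert e G) a = conf_upd G (conf_upd {e} a)"
  by (auto simp: conf_upd_def fun_eq_iff)

lemma Dop_rec:
  assumes fin: "finite F" and eF: "e \<in> F"
  shows "Dop F f a = Dop (F - {e}) f (conf_upd {e} a) - Dop (F - {e}) f a"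
proof -
  define F0 where "F0 = F - {e}"
  have F: "F = insert e F0" and e0: "e \<notin> F0" and fin0: "finite F0"
    using eF fin by (auto simp: F0_def)
  have disj: "Pow F0 \<inter> insert e ` Pow F0 = {}" using e0 by auto
  have inj: "inj_on (insert e) (Pow F0)"
  proof (rule inj_onI)
    fix A B assume "A \<in> Pow F0" "B \<in> Pow F0" "insert e A = insert e B"
    then show "A = B" using e0 by (metis Diff_insert_absorb PowD subsetD)
  qed
  have c1: "card (insert e F0 - G') = Suc (card (F0 - G'))" if "G' \<in> Pow F0" for G'
  proof -
    have "insert e F0 - G' = insert e (F0 - G')" using that e0 by auto
    then show ?thesis using fin0 e0 by simp
  qed
  have c2: "insert e F0 - insert e G' = F0 - G'" if "G' \<in> Pow F0" for G'
    using that e0 by auto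
  have "Dop F f a = (\<Sum>G'\<in>Pow F0. (-1) ^ card (insert e F0 - G') * f (conf_upd G' a))
      + (\<Sum>G'\<in>insert e ` Pow F0. (-1) ^ card (insert e F0 - G') * f (conf_upd G' a))"
    unfolding Dop_def F Pow_insert by (rule sum.union_disjoint) (use fin0 disj in auto)
  also have "(\<Sum>G'\<in>insert e ` Pow F0. (-1) ^ card (insert e F0 - G') * f (conf_upd G' a))
      = (\<Sum>G'\<in>Pow F0. (-1) ^ card (F0 - G') * f (conf_upd G' (conf_upd {e} a)))"
  proof (subst sum.reindex[OF inj], rule sum.cong[OF refl])
    fix G' assume G': "G' \<in> Pow F0"
    have "conf_upd (insert e G') a = conf_upd G' (conf_upd {e} a)" by (rule conf_upd_insert)
    then show "((\<lambda>G'. (-1) ^ card (insert e F0 - G') * f (conf_upd G' a)) \<circ> insert e) G'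
       = (-1) ^ card (F0 - G') * f (conf_upd G' (conf_upd {e} a))"
      using c2[OF G'] by simp
  qed
  also have "(\<Sum>G'\<in>Pow F0. (-1) ^ card (insert e F0 - G') * f (conf_upd G' a))
      = - (\<Sum>G'\<in>Pow F0. (-1) ^ card (F0 - G') * f (conf_upd G' a))"
    by (simp add: c1 sum_negf[symmetric])
  finally show ?thesis by (simp add: Dop_def F0_def)
qed

lemma Dop_sum: "Dop F (\<lambda>b. \<Sum>e\<in>E. f e b) a = (\<Sum>e\<in>E. Dop F (f e) a)"
  unfolding Dop_def by (simp add: sum_distrib_left) (rule sum.swap)

lemma Dop_cmult: "Dop F (\<lambda>b. c * f b) a = c * Dop F f a"
  unfolding Dop_def by (simp add: sum_distrib_left algebra_simps)

lemma Dop_const_factor: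
  assumes "e \<notin> F"
  shows "Dop F (\<lambda>b. of_bool (b e) * g b) a = of_bool (a e) * Dop F g a"
proof -
  have "conf_upd G' a e = a e" if "G' \<in> Pow F" for G' using that assms by (auto simp: conf_upd_def)
  then show ?thesis unfolding Dop_def by (auto simp: sum_distrib_left algebra_simps intro!: sum.cong)
qed

lemma Dop_prod:
  assumes fin: "finite F"
  shows "Dop F (\<lambda>b. of_bool (b e) * g b) a = of_bool (a e) * Dop F g a
     + (if e \<in> F then (1 - of_bool (a e)) * Dop (F - {e}) g (conf_upd {e} a) else 0)"
proof (cases "e \<in> F")
  case False then show ?thesis by (simp add: Dop_const_factor)
next
  case True
  have ee: "conf_upd {e} a e" by (simp add: conf_upd_def)
  have e0: "e \<notin> F - {e}" by simp
  have h1: "Dop (F - {e}) (\<lambda>b. of_bool (b e) * g b) (conf_upd {e} a) = Dop (F - {e}) g (conf_upd {e} a)"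
    using Dop_const_factor[OF e0, of g "conf_upd {e} a"] ee by simp
  have h2: "Dop (F - {e}) (\<lambda>b. of_bool (b e) * g b) a = of_bool (a e) * Dop (F - {e}) g a"
    using Dop_const_factor[OF e0] by simp
  show ?thesis using True
    unfolding Dop_rec[OF fin True, of "\<lambda>b. of_bool (b e) * g b"] Dop_rec[OF fin True, of g] h1 h2
    by (simp add: algebra_simps)
qed

lemma Dop_zero:
  assumes "finite G" "e \<in> G"
  shows "Dop G g (conf_upd {e} a) = 0"
proof -
  have "conf_upd {e} (conf_upd {e} a) = conf_upd {e} a" by (auto simp: conf_upd_def)
  then show ?thesis by (simp add: Dop_rec[OF assms])
qed


theorem lemma3p2:
  fixes m k :: nat and \<xi> :: "real ^ ('d::finite)" and a :: "'d conf"
    and v :: "'d conf \<Rightarrow> 'd pt \<Rightarrow> real"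
  assumes "m \<ge> 1" and "k \<ge> 1"
    and v_bd: "\<And>b. \<forall>x\<in>bdry (cube m). v b x = lin \<xi> x"
    and v_harm: "\<And>b. \<forall>x\<in>intr (cube m). divag b (v b) x = 0"
  shows "(\<Sum>F\<in>{F. F \<subseteq> edges_in (cube m) \<and> card F = k}. Dop F (energy m \<xi>) a)
   = (1 / real (card (cube m :: 'd pt set))) *
       inner_on (cube m) (grad (lin \<xi>))
         (\<lambda>e'. of_bool (a e') *
            (\<Sum>F\<in>{F. F \<subseteq> edges_in (cube m) \<and> card F = k}.
               Dop F (\<lambda>b. grad (v b) e') a))
   + (1 / real (card (cube m :: 'd pt set))) *
       (\<Sum>e\<in>edges_in (cube m).
          inner_on (cube m) (grad (lin \<xi>))
            (\<lambda>e'. (of_bool (conf_upd {e} a e') - of_bool (a e')) *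
               (\<Sum>G\<in>{G. G \<subseteq> edges_in (cube m) \<and> card G = k - 1}.
                  Dop G (\<lambda>b. grad (v b) e') (conf_upd {e} a))))"
proof -
  define Q where "Q = (cube m :: 'd pt set)"
  define E where "E = edges_in Q"
  define c where "c = 1 / real (card Q)"
  define L where "L = grad (lin \<xi>)"
  define g where "g e b = grad (v b) e" for e b
  define SK where "SK = {F. F \<subseteq> E \<and> card F = k}"
  define SK1 where "SK1 = {G. G \<subseteq> E \<and> card G = k - 1}"
  have finE: "finite E" unfolding E_def Q_def by (rule finite_edges[OF finite_cube])
  have finSK: "finite SK" unfolding SK_def
    by (rule finite_subset[of _ "Pow E"]) (use finE in auto)
  have finSK1: "finite SK1" unfolding SK1_def
    by (rule finite_subset[of _ "Pow E"]) (use finE in auto)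
  have finF: "finite F" if "F \<in> SK" for F using that finE by (auto simp: SK_def intro: finite_subset)
  have en: "energy m \<xi> = (\<lambda>b. c * (\<Sum>e\<in>E. of_bool (b e) * (L e * g e b)))"
    using energy_eq[OF v_bd v_harm] by (auto simp: fun_eq_iff c_def Q_def E_def L_def g_def)
  define X where "X e G = (1 - of_bool (a e)) * (L e * Dop G (g e) (conf_upd {e} a))" for e G
  have "(\<Sum>F\<in>SK. Dop F (energy m \<xi>) a)
     = (\<Sum>F\<in>SK. c * (\<Sum>e\<in>E. of_bool (a e) * (L e * Dop F (g e) a)
            + (if e \<in> F then X e (F - {e}) else 0)))"
  proof (rule sum.cong[OF refl])
    fix F assume F: "F \<in> SK"
    show "Dop F (energy m \<xi>) a = c * (\<Sum>e\<in>E. of_bool (a e) * (L e * Dop F (g e) a)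
            + (if e \<in> F then X e (F - {e}) else 0))"
      unfolding en Dop_cmult Dop_sum Dop_prod[OF finF[OF F]]
      by (intro arg_cong[where f="\<lambda>x. c * x"] sum.cong refl) (auto simp: X_def Dop_cmult)
  qed
  also have "\<dots> = c * (\<Sum>e\<in>E. L e * (of_bool (a e) * (\<Sum>F\<in>SK. Dop F (g e) a)))
      + c * (\<Sum>e\<in>E. \<Sum>F\<in>SK. if e \<in> F then X e (F - {e}) else 0)"
    by (simp add: sum.distrib sum_distrib_left distrib_left algebra_simps sum.swap[of _ SK E])
  also have "(\<Sum>e\<in>E. \<Sum>F\<in>SK. if e \<in> F then X e (F - {e}) else 0)
     = (\<Sum>e\<in>E. L e * (1 - of_bool (a e)) * (\<Sum>G\<in>SK1. Dop G (g e) (conf_upd {e} a)))"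
  proof (rule sum.cong[OF refl])
    fix e assume eE: "e \<in> E"
    have "(\<Sum>F\<in>SK. if e \<in> F then X e (F - {e}) else 0) = (\<Sum>F\<in>{F\<in>SK. e \<in> F}. X e (F - {e}))"
      using finSK by (simp add: sum.inter_filter)
    also have "\<dots> = (\<Sum>G\<in>{G\<in>SK1. e \<notin> G}. X e G)"
    proof (rule sum.reindex_bij_witness[where i = "insert e" and j = "\<lambda>F. F - {e}"])
      fix F assume "F \<in> {F\<in>SK. e \<in> F}"
      then show "insert e (F - {e}) = F" by auto
    next
      fix F assume F: "F \<in> {F\<in>SK. e \<in> F}"
      then have "finite F" using finF by auto
      then show "F - {e} \<in> {G\<in>SK1. e \<notin> G}" using F by (auto simp: SK_def SK1_def)
    next
      fix G assume "G \<in> {G\<in>SK1. e \<notin> G}"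
      then show "insert e G - {e} = G" by auto
    next
      fix G assume G: "G \<in> {G\<in>SK1. e \<notin> G}"
      then have "finite G" using finE by (auto simp: SK1_def intro: finite_subset)
      then show "insert e G \<in> {F\<in>SK. e \<in> F}" using G eE \<open>k \<ge> 1\<close> by (auto simp: SK_def SK1_def)
    qed simp
    also have "\<dots> = (\<Sum>G\<in>SK1. X e G)"
    proof (rule sum.mono_neutral_left[OF finSK1])
      show "\<forall>G\<in>SK1 - {G\<in>SK1. e \<notin> G}. X e G = 0"
      proof
        fix G assume "G \<in> SK1 - {G\<in>SK1. e \<notin> G}"
        then have "finite G" "e \<in> G" using finE by (auto simp: SK1_def intro: finite_subset)
        then show "X e G = 0" by (simp add: X_def Dop_zero)
      qed
    qed auto
    also have "\<dots> = L e * (1 - of_bool (a e)) * (\<Sum>G\<in>SK1. Dop G (g e) (conf_upd {e} a))"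
      by (simp add: X_def sum_distrib_left algebra_simps)
    finally show "(\<Sum>F\<in>SK. if e \<in> F then X e (F - {e}) else 0)
      = L e * (1 - of_bool (a e)) * (\<Sum>G\<in>SK1. Dop G (g e) (conf_upd {e} a))" .
  qed
  also have "(\<Sum>e\<in>E. L e * (1 - of_bool (a e)) * (\<Sum>G\<in>SK1. Dop G (g e) (conf_upd {e} a)))
     = (\<Sum>e\<in>E. \<Sum>e'\<in>E. L e' * ((of_bool (conf_upd {e} a e') - of_bool (a e')) *
               (\<Sum>G\<in>SK1. Dop G (g e') (conf_upd {e} a))))"
  proof (rule sum.cong[OF refl])
    fix e assume eE: "e \<in> E"
    have "(\<Sum>e'\<in>E. L e' * ((of_bool (conf_upd {e} a e') - of_bool (a e')) *
               (\<Sum>G\<in>SK1. Dop G (g e') (conf_upd {e} a))))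
        = (\<Sum>e'\<in>E. if e' = e then L e * (1 - of_bool (a e)) * (\<Sum>G\<in>SK1. Dop G (g e) (conf_upd {e} a)) else 0)"
      by (rule sum.cong[OF refl]) (auto simp: conf_upd_def)
    also have "\<dots> = L e * (1 - of_bool (a e)) * (\<Sum>G\<in>SK1. Dop G (g e) (conf_upd {e} a))"
      using eE finE by (simp add: sum.delta')
    finally show "L e * (1 - of_bool (a e)) * (\<Sum>G\<in>SK1. Dop G (g e) (conf_upd {e} a))
      = (\<Sum>e'\<in>E. L e' * ((of_bool (conf_upd {e} a e') - of_bool (a e')) *
               (\<Sum>G\<in>SK1. Dop G (g e') (conf_upd {e} a))))" by simp
  qed
  finally show ?thesis
    unfolding inner_on_def Q_def[symmetric] E_def[symmetric] c_def[symmetric] L_def[symmetric]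
      SK_def[symmetric] SK1_def[symmetric] g_def[symmetric]
    by simp
qed

end
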